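(* Let $X(t)$ satisfy (A1)–(A2), let $\mathbf v:\mathcal S_n\to\mathbb R^d$, and let $F^{\mathbf v}_k(t,\mathbf x)=\mathbb P\{X(t)=k,\ \mathbf L^{\mathbf v}(t)\le\mathbf x\}$. Then for every $k\in\mathcal S_n$ and every $\mathbf x\in\mathbb R^d\setminus\partial\mathbb R_+^d$, \[ \lim_{t\to0^+}F^{\mathbf v}_k(t,\mathbf x)=\mathbb 1_{\mathbb R_+^d}(\mathbf x)\,\mathbb P\{X(0)=k\}=F^{\mathbf v}_k(0,\mathbf x). \]
   Context: $\mathbb R_+^d=[0,\infty)^d$ and $\partial\mathbb R_+^d$ is its topological boundary in $\mathbb R^d$. (A1): $\{X(t)\}_{t\ge0}$ is a regular jump Markov process on $(\Omega,\mathcal F,\mathbb P)$ with values in $\mathcal S_n=\{1,\dots,n\}$, right-continuous trajectories, transition rates $q_{ij}(t)$. (A2): $Q(t)=(q_{ij}(t))$ is conservative ($q_i(t):=-q_{ii}(t)=\sum_{j\ne i}q_{ij}(t)$), continuous and bounded on $[0,\infty)$, and for each $i$ either $q_i\equiv0$ or $q_i>0$ everywhere with $\int_0^\infty q_i=\infty$. $\mathbf L^{\mathbf v}(t)=\int_0^t\mathbf v(X(s))\,ds$; comparisons componentwise. *)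

theory Defs
  imports "HOL-Probability.Probability"
begin

definition states :: "nat \<Rightarrow> nat set" where
  "states n = {1..n}"

definition jump_times :: "(real \<Rightarrow> nat) \<Rightarrow> real \<Rightarrow> real set" where
  "jump_times f T = {s \<in> {0<..T}. \<forall>e>0. \<exists>u\<in>{s-e<..<s}. f u \<noteq> f s}"

definition regular_jump_path :: "(real \<Rightarrow> nat) \<Rightarrow> bool" where
  "regular_jump_path f \<longleftrightarrow>
     (\<forall>t\<ge>0. \<exists>e>0. \<forall>s\<in>{t..<t+e}. f s = f t) \<and> (\<forall>T\<ge>0. finite (jump_times f T))"

text \<open>(A1): X is a regular jump Markov process on the probability space M with values
  in S_n, right-continuous trajectories, and transition rates q t i j, i.e. there is a
  transition function P s t i j (Markov property: conditional on the past up to time s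
  and on X s = i, the probability that X t = j is P s t i j) with
  q t i j = lim_{h -> 0+} (P t (t+h) i j - delta_ij) / h.\<close>
definition regular_jump_markov ::
  "'w measure \<Rightarrow> (real \<Rightarrow> 'w \<Rightarrow> nat) \<Rightarrow> nat \<Rightarrow> (real \<Rightarrow> nat \<Rightarrow> nat \<Rightarrow> real) \<Rightarrow> bool" where
  "regular_jump_markov M X n q \<longleftrightarrow>
     prob_space M \<and>
     (\<forall>t\<ge>0. X t \<in> measurable M (count_space UNIV)) \<and>
     (\<forall>t\<ge>0. \<forall>\<omega>\<in>space M. X t \<omega> \<in> states n) \<and>
     (\<forall>\<omega>\<in>space M. regular_jump_path (\<lambda>t. X t \<omega>)) \<and>
     (\<exists>P :: real \<Rightarrow> real \<Rightarrow> nat \<Rightarrow> nat \<Rightarrow> real.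
        (\<forall>T a s t i j. finite T \<longrightarrow> T \<subseteq> {0..s} \<longrightarrow> 0 \<le> s \<longrightarrow> s \<le> t \<longrightarrow>
            measure M {\<omega>\<in>space M. (\<forall>u\<in>T. X u \<omega> = a u) \<and> X s \<omega> = i \<and> X t \<omega> = j}
            = measure M {\<omega>\<in>space M. (\<forall>u\<in>T. X u \<omega> = a u) \<and> X s \<omega> = i} * P s t i j) \<and>
        (\<forall>t\<ge>0. \<forall>i\<in>states n. \<forall>j\<in>states n.
            ((\<lambda>h. (P t (t + h) i j - (if i = j then 1 else 0)) / h) \<longlongrightarrow> q t i j)
              (at_right 0)))"

definition rates_A2 :: "nat \<Rightarrow> (real \<Rightarrow> nat \<Rightarrow> nat \<Rightarrow> real) \<Rightarrow> bool" where
  "rates_A2 n q \<longleftrightarrow>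
     (\<forall>t\<ge>0. \<forall>i\<in>states n. - q t i i = (\<Sum>j\<in>states n - {i}. q t i j)) \<and>
     (\<forall>i\<in>states n. \<forall>j\<in>states n. continuous_on {0..} (\<lambda>t. q t i j)) \<and>
     (\<exists>B. \<forall>t\<ge>0. \<forall>i\<in>states n. \<forall>j\<in>states n. \<bar>q t i j\<bar> \<le> B) \<and>
     (\<forall>i\<in>states n. (\<forall>t\<ge>0. - q t i i = 0) \<or>
        ((\<forall>t\<ge>0. - q t i i > 0) \<and>
         filterlim (\<lambda>T. integral {0..T} (\<lambda>t. - q t i i)) at_top at_top))"

definition occupation :: "(nat \<Rightarrow> real^'d) \<Rightarrow> (real \<Rightarrow> 'w \<Rightarrow> nat) \<Rightarrow> real \<Rightarrow> 'w \<Rightarrow> real^'d" where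
  "occupation v X t \<omega> = integral {0..t} (\<lambda>s. v (X s \<omega>))"

definition Fv :: "'w measure \<Rightarrow> (nat \<Rightarrow> real^'d) \<Rightarrow> (real \<Rightarrow> 'w \<Rightarrow> nat) \<Rightarrow> nat \<Rightarrow> real \<Rightarrow> real^'d \<Rightarrow> real" where
  "Fv M v X k t x = measure M {\<omega>\<in>space M. X t \<omega> = k \<and> (\<forall>i. occupation v X t \<omega> $ i \<le> x $ i)}"

definition nonneg_orthant :: "(real^'d) set" where
  "nonneg_orthant = {x. \<forall>i. 0 \<le> x $ i}"

end

theory Submission
  imports Defs
begin

lemma occ_bound:
  fixes v :: "nat \<Rightarrow> real^'d"
  assumes C: "\<And>s. 0 \<le> s \<Longrightarrow> norm (v (X s \<omega>)) \<le> C" and C0: "0 \<le> C" and t: "0 \<le> t"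
  shows "norm (occupation v X t \<omega>) \<le> C * t"
proof (cases "(\<lambda>s. v (X s \<omega>)) integrable_on {0..t}")
  case True
  then have "((\<lambda>s. v (X s \<omega>)) has_integral occupation v X t \<omega>) (cbox 0 t)"
    unfolding occupation_def by (simp add: integrable_integral)
  from has_integral_bound[OF C0 this] show ?thesis using C t by (auto simp: content_real)
next
  case False
  then show ?thesis unfolding occupation_def using C0 t
    by (simp add: not_integrable_integral)
qed

lemma frontier_char:
  fixes x :: "real^'d"
  assumes "x \<notin> frontier nonneg_orthant"
  shows "(\<forall>i. 0 < x $ i) \<or> (\<exists>i. x $ i < 0)"
proof (rule ccontr)
  assume "\<not> ?thesis"
  then obtain i where xi: "x $ i = 0" and nn: "\<forall>j. 0 \<le> x $ j" by (auto simp: not_less) (metis order_antisym_conv not_le)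
  have "x \<in> frontier nonneg_orthant"
    unfolding frontier_straddle
  proof (intro allI impI conjI)
    fix e :: real assume e: "e > 0"
    show "\<exists>y\<in>nonneg_orthant. dist x y < e" using nn e by (intro bexI[of _ x]) (auto simp: nonneg_orthant_def)
    let ?y = "x - axis i (e/2)"
    have ny: "?y \<notin> nonneg_orthant" using xi e by (auto simp: nonneg_orthant_def intro!: exI[of _ i])
    have "axis i (e/2) = (e/2) *\<^sub>R (axis i 1 :: real^'d)" by (simp add: vec_eq_iff axis_def)
    then have "norm (axis i (e/2) :: real^'d) = e/2" using e by simp
    then have "dist x ?y < e" using e
      by (simp add: dist_norm)
    with ny show "\<exists>y. y \<notin> nonneg_orthant \<and> dist x y < e" by blast
  qed
  with assms show False by simp
qed

theorem proposition2:
  fixes M :: "'w measure" and X :: "real \<Rightarrow> 'w \<Rightarrow> nat" and n :: nat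
    and q :: "real \<Rightarrow> nat \<Rightarrow> nat \<Rightarrow> real" and v :: "nat \<Rightarrow> real^'d"
    and k :: nat and x :: "real^'d"
  assumes "regular_jump_markov M X n q"
    and "rates_A2 n q"
    and "k \<in> states n"
    and "x \<notin> frontier nonneg_orthant"
  shows "((\<lambda>t. Fv M v X k t x) \<longlongrightarrow>
            indicator nonneg_orthant x * measure M {\<omega>\<in>space M. X 0 \<omega> = k}) (at_right 0)
         \<and> indicator nonneg_orthant x * measure M {\<omega>\<in>space M. X 0 \<omega> = k} = Fv M v X k 0 x"
proof -
  have ps: "prob_space M" and meas: "\<And>t. t \<ge> 0 \<Longrightarrow> X t \<in> measurable M (count_space UNIV)"
    and rng: "\<And>t \<omega>. t \<ge> 0 \<Longrightarrow> \<omega> \<in> space M \<Longrightarrow> X t \<omega> \<in> states n"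
    and paths: "\<And>\<omega>. \<omega> \<in> space M \<Longrightarrow> regular_jump_path (\<lambda>t. X t \<omega>)"
    using assms(1) unfolding regular_jump_markov_def by auto
  interpret prob_space M by (rule ps)
  define A where "A t = {\<omega>\<in>space M. X t \<omega> = k}" for t
  have Asets: "A t \<in> sets M" if "t \<ge> 0" for t
  proof -
    have "A t = X t -` {k} \<inter> space M" unfolding A_def by auto
    then show ?thesis using measurable_sets[OF meas[OF that], of "{k}"] by simp
  qed
  define C where "C = (\<Sum>j\<in>states n. norm (v j))"
  have C0: "0 \<le> C" unfolding C_def by (simp add: sum_nonneg)
  have Cb: "norm (v (X s \<omega>)) \<le> C" if "\<omega> \<in> space M" "0 \<le> s" for s \<omega>
    unfolding C_def using rng[OF that(2,1)]
    by (intro member_le_sum) (auto simp: states_def)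
  have bnd: "\<bar>occupation v X t \<omega> $ i\<bar> \<le> C * t" if "\<omega> \<in> space M" "0 \<le> t" for t \<omega> i
    using component_le_norm_cart[of "occupation v X t \<omega>" i] occ_bound[where X=X and \<omega>=\<omega> and v=v and C=C and t=t, OF Cb[OF that(1)] C0 that(2)]
    by linarith
  have ev0: "\<forall>\<^sub>F t in at_right (0::real). 0 < t" by (rule eventually_at_right_less)
  have evC: "\<forall>\<^sub>F t in at_right (0::real). C * t < a" if "a > 0" for a
  proof -
    have "((\<lambda>t. C * t) \<longlongrightarrow> C * 0) (at_right (0::real))" by (intro tendsto_intros)
    then show ?thesis using that by (intro order_tendstoD(2)) auto
  qed
  have L: "((\<lambda>t. measure M (A t)) \<longlongrightarrow> measure M (A 0)) (at_right 0)"
    unfolding tendsto_at_iff_sequentially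
  proof (intro allI impI)
    fix T :: "nat \<Rightarrow> real" assume T: "\<forall>i. T i \<in> {0<..} - {0}" and T0: "T \<longlonglongrightarrow> 0"
    have "(\<lambda>i. integral\<^sup>L M (indicator (A (T i)) :: 'w \<Rightarrow> real)) \<longlonglongrightarrow> integral\<^sup>L M (indicator (A 0))"
    proof (rule integral_dominated_convergence[where w = "\<lambda>_. 1"])
      show "indicator (A 0) \<in> borel_measurable M" using Asets by simp
      show "indicator (A (T i)) \<in> borel_measurable M" for i using Asets T by (simp add: less_imp_le)
      show "integrable M (\<lambda>_. 1::real)" by simp
      show "AE x in M. norm (indicator (A (T i)) x :: real) \<le> 1" for i by (simp add: indicator_def)
      show "AE \<omega> in M. (\<lambda>i. indicator (A (T i)) \<omega> :: real) \<longlonglongrightarrow> indicator (A 0) \<omega>"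
      proof (rule AE_I2)
        fix \<omega> assume om: "\<omega> \<in> space M"
        have "\<forall>t\<ge>0. \<exists>e>0. \<forall>s\<in>{t..<t+e}. X s \<omega> = X t \<omega>"
          using paths[OF om] unfolding regular_jump_path_def by (elim conjE)
        then obtain e where e: "e > 0" "\<forall>s\<in>{0..<0+e}. X s \<omega> = X 0 \<omega>"
          by (meson order_refl)
        have "\<forall>\<^sub>F i in sequentially. T i < e" using T0 e(1) by (intro order_tendstoD(2)) auto
        then have "\<forall>\<^sub>F i in sequentially. indicator (A (T i)) \<omega> = (indicator (A 0) \<omega> :: real)"
        proof eventually_elim
          case (elim i)
          have "0 < T i" using T by simp
          then have "T i \<in> {0..<0+e}" using elim by simp
          then have "X (T i) \<omega> = X 0 \<omega>" using e(2) by blast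
          then show ?case by (simp add: A_def indicator_def om)
        qed
        then show "(\<lambda>i. indicator (A (T i)) \<omega> :: real) \<longlonglongrightarrow> indicator (A 0) \<omega>"
          by (rule tendsto_eventually)
      qed
    qed
    moreover have "A t \<inter> space M = A t" for t unfolding A_def by auto
    ultimately show "((\<lambda>t. measure M (A t)) \<circ> T) \<longlonglongrightarrow> measure M (A 0)"
      by (simp add: comp_def)
  qed
  have occ0: "occupation v X 0 \<omega> = 0" for \<omega> unfolding occupation_def by simp
  have part2: "indicator nonneg_orthant x * measure M (A 0) = Fv M v X k 0 x"
  proof (cases "x \<in> nonneg_orthant")
    case True
    then have "{\<omega>\<in>space M. X 0 \<omega> = k \<and> (\<forall>i. occupation v X 0 \<omega> $ i \<le> x $ i)} = A 0"
      by (auto simp: A_def occ0 nonneg_orthant_def)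
    then show ?thesis using True unfolding Fv_def by simp
  next
    case False
    then have e: "{\<omega>\<in>space M. X 0 \<omega> = k \<and> (\<forall>i. occupation v X 0 \<omega> $ i \<le> x $ i)} = {}"
      by (auto simp: occ0 nonneg_orthant_def)
    show ?thesis using False unfolding Fv_def e by simp
  qed
  have part1: "((\<lambda>t. Fv M v X k t x) \<longlongrightarrow> indicator nonneg_orthant x * measure M (A 0)) (at_right 0)"
  proof (cases "\<forall>i. 0 < x $ i")
    case True
    then have ind: "indicator nonneg_orthant x = (1::real)" by (auto simp: nonneg_orthant_def less_imp_le)
    have "\<forall>\<^sub>F t in at_right (0::real). \<forall>i. C * t < x $ i"
      using True by (intro eventually_all_finite evC) auto
    with ev0 have "\<forall>\<^sub>F t in at_right (0::real). Fv M v X k t x = measure M (A t)"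
    proof eventually_elim
      case (elim t)
      have "{\<omega>\<in>space M. X t \<omega> = k \<and> (\<forall>i. occupation v X t \<omega> $ i \<le> x $ i)} = A t"
      proof -
        have "occupation v X t \<omega> $ i \<le> x $ i" if "\<omega> \<in> space M" for \<omega> i
        proof -
          have "\<bar>occupation v X t \<omega> $ i\<bar> \<le> C * t" using bnd[OF that, of t i] elim by simp
          moreover have "C * t < x $ i" using elim by blast
          ultimately show ?thesis by linarith
        qed
        then show ?thesis by (auto simp: A_def)
      qed
      then show ?case unfolding Fv_def by (rule arg_cong)
    qed
    then have "((\<lambda>t. Fv M v X k t x) \<longlongrightarrow> measure M (A 0)) (at_right 0)"
      by (rule tendsto_cong[THEN iffD2]) (rule L)
    then show ?thesis using ind by simp
  next
    case False
    with frontier_char[OF assms(4)] obtain i where xi: "x $ i < 0" by blast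
    then have "x \<notin> nonneg_orthant" by (auto simp: nonneg_orthant_def not_le)
    then have ind: "indicator nonneg_orthant x = (0::real)" by simp
    have "\<forall>\<^sub>F t in at_right (0::real). C * t < - x $ i" using xi by (intro evC) auto
    with ev0 have "\<forall>\<^sub>F t in at_right (0::real). Fv M v X k t x = 0"
    proof eventually_elim
      case (elim t)
      have "{\<omega>\<in>space M. X t \<omega> = k \<and> (\<forall>i. occupation v X t \<omega> $ i \<le> x $ i)} = {}"
      proof -
        have "\<not> occupation v X t \<omega> $ i \<le> x $ i" if "\<omega> \<in> space M" for \<omega>
        proof -
          have "\<bar>occupation v X t \<omega> $ i\<bar> \<le> C * t" using bnd[OF that, of t i] elim by simp
          moreover have "C * t < - x $ i" using elim by blast
          ultimately show ?thesis by linarith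
        qed
        then show ?thesis by auto
      qed
      then show ?case unfolding Fv_def by (metis measure_empty)
    qed
    then have "((\<lambda>t. Fv M v X k t x) \<longlongrightarrow> 0) (at_right 0)"
      by (rule tendsto_cong[THEN iffD2]) (rule tendsto_const)
    then show ?thesis using ind by simp
  qed
  show ?thesis using part1 part2 unfolding A_def by simp
qed

end
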